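(* Let $\mathfrak{X}$ be an infinite-dimensional complex separable Hilbert space and $T:\mathcal{D}(T)\subseteq\mathfrak{X}\to\mathfrak{X}$ a densely defined symmetric operator with $T^{-1}\in B(\mathfrak{X})$ compact. Let $\{z_n\}_{n\ge1}$ be the distinct eigenvalues of $T$ and $Q$ a scalar entire function whose zeros are exactly the $z_n$, all simple. Let $F$ be the $B(\mathfrak{X})$-valued entire function with $F(z)=Q(z)(zI-T)^{-1}$ for $z\notin\{z_n\}$, and let $\mathcal{H}=\mathcal{H}_F$. Then every $f\in\mathcal{H}$ is completely determined by $\{f(z_n)\}_{n\ge1}$ and $$f(z)=\sum_{n=1}^\infty\frac{Q(z)}{(z-z_n)Q'(z_n)}f(z_n)\quad\text{for all }z\in\mathbb{C}.$$
   Context: $\mathcal{H}_F=\{F(\cdot)u:u\in\mathfrak{X}\}$ with norm $\|f\|=\inf\{\|w\|_{\mathfrak{X}}:F(\cdot)w=f\}$; it is a reproducing kernel Hilbert space of $\mathfrak{X}$-valued entire functions with kernel $K_\gamma(z)=F(z)F(\gamma)^*$. *)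

theory Defs
  imports "HOL-Analysis.Analysis"
begin

class complex_vector = real_vector +
  fixes scaleC :: "complex \<Rightarrow> 'a \<Rightarrow> 'a" (infixr "*\<^sub>C" 75)
  assumes scaleC_add_right: "a *\<^sub>C (x + y) = a *\<^sub>C x + a *\<^sub>C y"
    and scaleC_add_left: "(a + b) *\<^sub>C x = a *\<^sub>C x + b *\<^sub>C x"
    and scaleC_scaleC: "a *\<^sub>C (b *\<^sub>C x) = (a * b) *\<^sub>C x"
    and scaleC_one: "1 *\<^sub>C x = x"
    and scaleR_scaleC: "scaleR r x = complex_of_real r *\<^sub>C x"

class complex_inner = complex_vector + real_normed_vector +
  fixes cinner :: "'a \<Rightarrow> 'a \<Rightarrow> complex"
  assumes cinner_commute: "cinner x y = cnj (cinner y x)"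
    and cinner_add_left: "cinner (x + y) z = cinner x z + cinner y z"
    and cinner_scaleC_left: "cinner (r *\<^sub>C x) y = cnj r * cinner x y"
    and cinner_self_pos: "x \<noteq> 0 \<Longrightarrow> Re (cinner x x) > 0"
    and norm_eq_sqrt_cinner: "norm x = sqrt (Re (cinner x x))"

class chilbert_space = complex_inner + complete_space

definition cspan :: "'a::complex_vector set \<Rightarrow> 'a set" where
  "cspan S = {(\<Sum>x\<in>A. c x *\<^sub>C x) | A c. finite A \<and> A \<subseteq> S}"

definition separable_hspace :: "'a::topological_space itself \<Rightarrow> bool" where
  "separable_hspace _ \<longleftrightarrow> (\<exists>S::'a set. countable S \<and> closure S = UNIV)"

definition infinite_dimensional :: "'a::complex_vector itself \<Rightarrow> bool" where
  "infinite_dimensional _ \<longleftrightarrow> \<not> (\<exists>S::'a set. finite S \<and> cspan S = UNIV)"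

definition csubspace :: "'a::complex_vector set \<Rightarrow> bool" where
  "csubspace D \<longleftrightarrow> 0 \<in> D \<and> (\<forall>x\<in>D. \<forall>y\<in>D. x + y \<in> D) \<and> (\<forall>c. \<forall>x\<in>D. c *\<^sub>C x \<in> D)"

definition clinear_on :: "'a::complex_vector set \<Rightarrow> ('a \<Rightarrow> 'b::complex_vector) \<Rightarrow> bool" where
  "clinear_on D T \<longleftrightarrow> (\<forall>x\<in>D. \<forall>y\<in>D. T (x + y) = T x + T y) \<and> (\<forall>c. \<forall>x\<in>D. T (c *\<^sub>C x) = c *\<^sub>C T x)"

definition densely_defined_op :: "'a::complex_inner set \<Rightarrow> ('a \<Rightarrow> 'a) \<Rightarrow> bool" where
  "densely_defined_op D T \<longleftrightarrow> csubspace D \<and> clinear_on D T \<and> closure D = UNIV"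

definition symmetric_op :: "'a::complex_inner set \<Rightarrow> ('a \<Rightarrow> 'a) \<Rightarrow> bool" where
  "symmetric_op D T \<longleftrightarrow> densely_defined_op D T \<and>
     (\<forall>x\<in>D. \<forall>y\<in>D. cinner (T x) y = cinner x (T y))"

definition compact_bounded_inverse :: "'a::complex_inner set \<Rightarrow> ('a \<Rightarrow> 'a) \<Rightarrow> bool" where
  "compact_bounded_inverse D T \<longleftrightarrow> bij_betw T D UNIV \<and> bounded_linear (inv_into D T)
     \<and> compact (closure (inv_into D T ` cball 0 1))"

definition op_eigenvalue :: "'a::complex_vector set \<Rightarrow> ('a \<Rightarrow> 'a) \<Rightarrow> complex \<Rightarrow> bool" where
  "op_eigenvalue D T mu \<longleftrightarrow> (\<exists>x\<in>D. x \<noteq> 0 \<and> T x = mu *\<^sub>C x)"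

definition resolvent :: "'a::complex_vector set \<Rightarrow> ('a \<Rightarrow> 'a) \<Rightarrow> complex \<Rightarrow> 'a \<Rightarrow> 'a" where
  "resolvent D T z = inv_into D (\<lambda>y. z *\<^sub>C y - T y)"

definition cbounded_op :: "('a::complex_inner \<Rightarrow>\<^sub>L 'a) \<Rightarrow> bool" where
  "cbounded_op A \<longleftrightarrow> (\<forall>c x. blinfun_apply A (c *\<^sub>C x) = c *\<^sub>C blinfun_apply A x)"

definition op_entire :: "(complex \<Rightarrow> ('a::complex_inner \<Rightarrow>\<^sub>L 'a)) \<Rightarrow> bool" where
  "op_entire F \<longleftrightarrow> (\<forall>z. \<exists>L::'a \<Rightarrow>\<^sub>L 'a.
     ((\<lambda>w. onorm (\<lambda>x. inverse (w - z) *\<^sub>C (F w x - F z x) - L x)) \<longlongrightarrow> 0) (at z))"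

definition H_space :: "(complex \<Rightarrow> ('a::complex_inner \<Rightarrow>\<^sub>L 'a)) \<Rightarrow> (complex \<Rightarrow> 'a) set" where
  "H_space F = {(\<lambda>z. blinfun_apply (F z) u) | u. True}"

text \<open>Interpolation kernel \<open>Q(z)/((z - z_n) Q'(z_n))\<close>, with its removable value 1 at \<open>z = z_n\<close>.\<close>
definition interp_kernel :: "(complex \<Rightarrow> complex) \<Rightarrow> complex \<Rightarrow> complex \<Rightarrow> complex" where
  "interp_kernel Q zn z = (if z = zn then 1 else Q z / ((z - zn) * deriv Q zn))"

end

theory Submission
  imports Defs
begin



lemma scaleC_zero_left [simp]: "(0::complex) *\<^sub>C (x::'a::complex_vector) = 0"
proof -
  have "0 *\<^sub>C x = 0 *\<^sub>C x + (0::complex) *\<^sub>C x" by (metis add_0 scaleC_add_left)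
  thus ?thesis by simp
qed

lemma scaleC_zero_right [simp]: "c *\<^sub>C (0::'a::complex_vector) = 0"
proof -
  have "c *\<^sub>C (0::'a) = c *\<^sub>C 0 + c *\<^sub>C 0" by (metis add_0 scaleC_add_right)
  thus ?thesis by simp
qed

lemma scaleC_diff_left: "(a - b) *\<^sub>C (x::'a::complex_vector) = a *\<^sub>C x - b *\<^sub>C x"
  by (metis add_diff_cancel diff_add_cancel scaleC_add_left)

lemma scaleC_diff_right: "c *\<^sub>C ((x::'a::complex_vector) - y) = c *\<^sub>C x - c *\<^sub>C y"
  by (metis add_diff_cancel diff_add_cancel scaleC_add_right)

lemma scaleC_minus_right: "c *\<^sub>C (- (x::'a::complex_vector)) = - (c *\<^sub>C x)"
  using scaleC_diff_right[of c 0 x] by simp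

lemma scaleC_sum_right: "c *\<^sub>C (sum f A) = (\<Sum>i\<in>A. c *\<^sub>C (f i::'a::complex_vector))"
  by (induction A rule: infinite_finite_induct) (auto simp: scaleC_add_right)

lemma cinner_add_right: "cinner (x::'a::complex_inner) (y + z) = cinner x y + cinner x z"
  by (metis cinner_add_left cinner_commute complex_cnj_add)

lemma cinner_scaleC_right: "cinner (x::'a::complex_inner) (r *\<^sub>C y) = r * cinner x y"
  by (metis cinner_commute cinner_scaleC_left complex_cnj_cnj complex_cnj_mult)

lemma cinner_zero_left [simp]: "cinner 0 (x::'a::complex_inner) = 0"
  using cinner_add_left[of 0 0 x] by simp

lemma cinner_zero_right [simp]: "cinner (x::'a::complex_inner) 0 = 0"
  using cinner_add_right[of x 0 0] by simp

lemma cinner_diff_left: "cinner ((x::'a::complex_inner) - y) z = cinner x z - cinner y z"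
  by (metis add_diff_cancel_right' cinner_add_left diff_add_cancel)

lemma cinner_diff_right: "cinner (x::'a::complex_inner) (y - z) = cinner x y - cinner x z"
  by (metis add_diff_cancel_right' cinner_add_right diff_add_cancel)

lemma cinner_sum_right: "cinner (x::'a::complex_inner) (sum f A) = (\<Sum>i\<in>A. cinner x (f i))"
  by (induction A rule: infinite_finite_induct) (auto simp: cinner_add_right)

lemma cinner_sum_left: "cinner (sum f A) (x::'a::complex_inner) = (\<Sum>i\<in>A. cinner (f i) x)"
  by (induction A rule: infinite_finite_induct) (auto simp: cinner_add_left)

lemma cinner_scaleR_left: "cinner (r *\<^sub>R x) (y::'a::complex_inner) = of_real r * cinner x y"
  by (simp add: scaleR_scaleC cinner_scaleC_left)

lemma cinner_scaleR_right: "cinner (x::'a::complex_inner) (r *\<^sub>R y) = of_real r * cinner x y"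
  by (simp add: scaleR_scaleC cinner_scaleC_right)

lemma cinner_self_real: "cinner (x::'a::complex_inner) x = of_real ((norm x)^2)"
proof -
  have "Im (cinner x x) = 0" using cinner_commute[of x x]
    by (metis complex_cnj_cancel_iff complex_cnj_zero_iff complex_is_Real_iff Reals_cnj_iff)
  moreover have "Re (cinner x x) = (norm x)^2"
    using norm_eq_sqrt_cinner[of x]
    by (metis cinner_self_pos le_less norm_eq_zero real_sqrt_pow2 zero_complex.simps(1)
        cinner_zero_left power2_eq_square real_sqrt_eq_zero_cancel_iff)
  ultimately show ?thesis by (simp add: complex_eq_iff)
qed

lemma cinner_self_eq_zero: "cinner (x::'a::complex_inner) x = 0 \<longleftrightarrow> x = 0"
  by (simp add: cinner_self_real)

lemma norm_scaleC: "norm (c *\<^sub>C (x::'a::complex_inner)) = cmod c * norm x"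
proof -
  have "(norm (c *\<^sub>C x))^2 = (cmod c * norm x)^2"
  proof -
    have "of_real ((norm (c *\<^sub>C x))^2) = cinner (c *\<^sub>C x) (c *\<^sub>C x)" by (simp add: cinner_self_real)
    also have "\<dots> = cnj c * c * cinner x x" by (simp add: cinner_scaleC_left cinner_scaleC_right)
    also have "\<dots> = of_real ((cmod c * norm x)^2)"
      by (simp add: cinner_self_real complex_norm_square[symmetric] power_mult_distrib mult.commute)
    finally show ?thesis using of_real_eq_iff by blast
  qed
  thus ?thesis by (simp add: power2_eq_iff_nonneg)
qed

lemma norm_diff_sq: "(norm ((x::'a::complex_inner) - y))^2 = (norm x)^2 - 2 * Re (cinner x y) + (norm y)^2"
proof -
  have "of_real ((norm (x - y))^2) = cinner (x - y) (x - y)" by (simp add: cinner_self_real)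
  also have "\<dots> = cinner x x - cinner x y - cinner y x + cinner y y"
    by (simp add: cinner_diff_left cinner_diff_right)
  finally have "(norm (x - y))^2 = Re (cinner x x - cinner x y - cinner y x + cinner y y)"
    by (metis Re_complex_of_real)
  also have "\<dots> = (norm x)^2 - 2 * Re (cinner x y) + (norm y)^2"
    using cinner_commute[of y x] by (simp add: cinner_self_real)
  finally show ?thesis .
qed

lemma norm_add_sq: "(norm ((x::'a::complex_inner) + y))^2 = (norm x)^2 + 2 * Re (cinner x y) + (norm y)^2"
  using norm_diff_sq[of x "-y"] by (simp add: cinner_diff_right[of x 0 y, simplified])

lemma norm_sub_scaleC_sq: "(norm ((v::'a::complex_inner) - t *\<^sub>C e))^2
    = (norm v)^2 - 2 * Re (t * cinner v e) + (cmod t)^2 * (norm e)^2"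
  by (simp add: norm_diff_sq cinner_scaleC_right norm_scaleC power_mult_distrib)

lemma cauchy_schwarz: "cmod (cinner (x::'a::complex_inner) y) \<le> norm x * norm y"
proof (cases "y = 0")
  case True thus ?thesis by simp
next
  case False
  define c where "c = cinner x y"
  define t where "t = cnj c / of_real ((norm y)^2)"
  have ny: "norm y > 0" using False by simp
  have "0 \<le> (norm (x - t *\<^sub>C y))^2" by simp
  also have "\<dots> = (norm x)^2 - 2 * Re (t * c) + (cmod t)^2 * (norm y)^2"
    by (simp add: norm_sub_scaleC_sq c_def)
  also have "t * c = of_real ((cmod c)^2 / (norm y)^2)"
    by (simp add: t_def complex_norm_square[symmetric] mult.commute)
  also have "(cmod t)^2 = (cmod c)^2 / ((norm y)^2)^2"
    by (simp add: t_def norm_divide power_divide norm_power)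
  finally have "0 \<le> (norm x)^2 - (cmod c)^2 / (norm y)^2"
    using ny by (simp add: field_simps power2_eq_square)
  hence "(cmod c)^2 \<le> (norm x * norm y)^2" using ny
    by (simp add: field_simps power_mult_distrib)
  thus ?thesis unfolding c_def by (simp add: power2_le_iff_abs_le)
qed

lemma bounded_linear_cinner_right: "bounded_linear (\<lambda>y. cinner (x::'a::complex_inner) y)"
  apply (rule bounded_linear_intro[where K="norm x"])
    apply (simp add: cinner_add_right)
   apply (simp add: cinner_scaleR_right scaleR_conv_of_real)
  by (metis cauchy_schwarz mult.commute)

lemma bounded_linear_scaleC: "bounded_linear f \<Longrightarrow> bounded_linear (\<lambda>x. c *\<^sub>C (f x::'a::complex_inner))"
  apply (rule bounded_linear_intro[where K="cmod c * onorm f"])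
    apply (simp add: linear_simps scaleC_add_right)
   apply (simp add: linear_simps scaleR_scaleC scaleC_scaleC mult.commute)
  proof -
  fix x assume "bounded_linear f"
  hence "norm (f x) \<le> onorm f * norm x" by (rule onorm)
  hence "cmod c * norm (f x) \<le> cmod c * (onorm f * norm x)" by (simp add: mult_left_mono)
  thus "norm (c *\<^sub>C f x) \<le> norm x * (cmod c * onorm f)" by (simp add: norm_scaleC mult_ac)
qed




lemma parallelogram: "(norm ((x::'a::complex_inner) - y))^2 + (norm (x + y))^2 = 2 * (norm x)^2 + 2 * (norm y)^2"
  by (simp add: norm_diff_sq norm_add_sq)

lemma csubspace_scaleR: "csubspace M \<Longrightarrow> x \<in> M \<Longrightarrow> r *\<^sub>R x \<in> M"
  by (simp add: csubspace_def scaleR_scaleC)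

lemma csubspace_diff: "csubspace M \<Longrightarrow> x \<in> M \<Longrightarrow> y \<in> M \<Longrightarrow> x - y \<in> M"
proof -
  assume a: "csubspace M" "x \<in> M" "y \<in> M"
  have "(-1::complex) *\<^sub>C y \<in> M" using a by (simp add: csubspace_def)
  moreover have "(-1::complex) *\<^sub>C y = - y"
    using scaleC_add_left[of 1 "-1" y] by (simp add: scaleC_one eq_neg_iff_add_eq_0 add.commute)
  ultimately show ?thesis using a by (metis csubspace_def diff_conv_add_uminus)
qed

lemma projection_exists:
  fixes u :: "'a::chilbert_space"
  assumes sub: "csubspace M" and cl: "closed M"
  shows "\<exists>p\<in>M. \<forall>e\<in>M. cinner e (u - p) = 0"
proof -
  define d where "d = Inf ((\<lambda>e. norm (u - e)) ` M)"
  have M0: "0 \<in> M" using sub by (simp add: csubspace_def)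
  have bdd: "bdd_below ((\<lambda>e. norm (u - e)) ` M)" by (rule bdd_belowI[of _ 0]) auto
  have dle: "d \<le> norm (u - e)" if "e \<in> M" for e
    unfolding d_def using bdd that by (simp add: cInf_lower)
  have d0: "0 \<le> d" unfolding d_def using M0 by (intro cInf_greatest) auto
  have "\<exists>e\<in>M. norm (u - e) < d + 1 / (real k + 1)" for k
  proof -
    have "d < d + 1 / (real k + 1)" by simp
    then show ?thesis unfolding d_def using M0
      by (subst (asm) cInf_less_iff) (auto simp: bdd)
  qed
  then obtain e where eM: "\<And>k. e k \<in> M" and ek: "\<And>k. norm (u - e k) < d + 1 / (real k + 1)"
    by metis
  define B where "B = 4 * d + 2"
  have key: "(norm (e j - e k))^2 \<le> B * (1 / (real j + 1) + 1 / (real k + 1))" for j k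
  proof -
    define a where "a = 1 / (real j + 1)"
    define b where "b = 1 / (real k + 1)"
    have a01: "0 \<le> a" "a \<le> 1" and b01: "0 \<le> b" "b \<le> 1" by (auto simp: a_def b_def field_simps)
    have mid: "(1/2) *\<^sub>R (e j + e k) \<in> M"
      using sub eM by (metis csubspace_def csubspace_scaleR)
    have "2 * d \<le> 2 * norm (u - (1/2) *\<^sub>R (e j + e k))" using dle[OF mid] by simp
    also have "2 * norm (u - (1/2) *\<^sub>R (e j + e k)) = norm ((u - e j) + (u - e k))"
    proof -
      have "(u - e j) + (u - e k) = 2 *\<^sub>R (u - (1/2) *\<^sub>R (e j + e k))"
        by (simp add: algebra_simps scaleR_2)
      thus ?thesis by simp
    qed
    finally have h1: "2 * d \<le> norm ((u - e j) + (u - e k))" .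
    have h2: "(norm (e j - e k))^2 = 2 * (norm (u - e j))^2 + 2 * (norm (u - e k))^2 - (norm ((u - e j) + (u - e k)))^2"
      using parallelogram[of "u - e k" "u - e j"] by (simp add: algebra_simps)
    have "(2*d)^2 \<le> (norm ((u - e j) + (u - e k)))^2" using h1 d0 by (intro power_mono) auto
    moreover have "(norm (u - e j))^2 \<le> (d + a)^2" using ek[of j] unfolding a_def
      by (intro power_mono) auto
    moreover have "(norm (u - e k))^2 \<le> (d + b)^2" using ek[of k] unfolding b_def
      by (intro power_mono) auto
    ultimately have "(norm (e j - e k))^2 \<le> 2 * (d+a)^2 + 2*(d+b)^2 - (2*d)^2" using h2 by linarith
    also have "\<dots> = 4*d*a + 2*a*a + 4*d*b + 2*b*b" by (simp add: power2_eq_square algebra_simps)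
    also have "\<dots> \<le> 4*d*a + 2*a + 4*d*b + 2*b" using a01 b01
      by (intro add_mono mult_left_le) (auto intro: mult_le_one)
    also have "\<dots> = B * (a + b)" by (simp add: B_def algebra_simps)
    finally show ?thesis by (simp add: a_def b_def)
  qed
  have "Cauchy e"
  proof (rule CauchyI)
    fix \<epsilon> :: real assume "0 < \<epsilon>"
    obtain N :: nat where N: "2 * B / \<epsilon>^2 < real N" using reals_Archimedean2 by blast
    have Bpos: "0 < B" using d0 by (simp add: B_def)
    show "\<exists>N. \<forall>m\<ge>N. \<forall>n\<ge>N. norm (e m - e n) < \<epsilon>"
    proof (intro exI allI impI)
      fix m n assume mn: "N \<le> m" "N \<le> n"
      have "1 / (real m + 1) \<le> 1 / (real N + 1)" "1 / (real n + 1) \<le> 1 / (real N + 1)"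
        using mn by (auto simp: field_simps)
      hence "1 / (real m + 1) + 1 / (real n + 1) \<le> 2 / (real N + 1)" by simp
      hence "B * (1 / (real m + 1) + 1 / (real n + 1)) \<le> B * (2 / (real N + 1))"
        using Bpos by (intro mult_left_mono) auto
      hence "(norm (e m - e n))^2 \<le> B * (2 / (real N + 1))"
        using key[of m n] by linarith
      also have "\<dots> < \<epsilon>^2"
      proof -
        have "2 * B < \<epsilon>^2 * real N" using N \<open>0 < \<epsilon>\<close> by (simp add: field_simps)
        hence "2 * B < \<epsilon>^2 * (real N + 1)" using \<open>0 < \<epsilon>\<close>
          by (simp add: distrib_left) (smt (verit) zero_less_power)
        thus ?thesis by (simp add: field_simps)
      qed
      finally show "norm (e m - e n) < \<epsilon>" using \<open>0 < \<epsilon>\<close>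
        by (meson less_imp_le power_less_imp_less_base)
    qed
  qed
  then obtain p where lim: "e \<longlonglongrightarrow> p" using Cauchy_convergent_iff convergent_def by blast
  have pM: "p \<in> M" using cl eM lim closed_sequentially by blast
  have lim2: "(\<lambda>k. norm (u - e k)) \<longlonglongrightarrow> norm (u - p)"
    by (intro tendsto_intros lim)
  have lim3: "(\<lambda>k. norm (u - e k)) \<longlonglongrightarrow> d"
  proof (rule real_tendsto_sandwich[where f="\<lambda>k. d" and h="\<lambda>k. d + 1 / (real k + 1)"])
    show "\<forall>\<^sub>F k in sequentially. d \<le> norm (u - e k)" using dle eM by auto
    show "\<forall>\<^sub>F k in sequentially. norm (u - e k) \<le> d + 1 / (real k + 1)" using ek by (simp add: less_imp_le)
    show "(\<lambda>k. d) \<longlonglongrightarrow> d" by simp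
    show "(\<lambda>k. d + 1 / (real k + 1)) \<longlonglongrightarrow> d"
      using tendsto_add[OF tendsto_const[of d] LIMSEQ_inverse_real_of_nat] by (simp add: inverse_eq_divide add.commute)
  qed
  have np: "norm (u - p) = d" using LIMSEQ_unique[OF lim2 lim3] .

  show ?thesis
  proof (intro bexI[OF _ pM] ballI)
    fix e assume eM': "e \<in> M"
    define v where "v = u - p"
    define c where "c = cinner v e"
    define s where "s = 1 / ((norm e)^2 + 1)"
    define t where "t = of_real s * cnj c"
    have s0: "0 < s" unfolding s_def by (simp add: add_nonneg_pos)
    have s1: "s * (norm e)^2 \<le> 1"
    proof -
      have "0 < (norm e)^2 + 1" by (simp add: add_nonneg_pos)
      thus ?thesis unfolding s_def by (simp add: field_simps)
    qed
    have "p + t *\<^sub>C e \<in> M" using sub pM eM' by (simp add: csubspace_def)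
    hence "d \<le> norm (u - (p + t *\<^sub>C e))" by (rule dle)
    hence "(norm v)^2 \<le> (norm (v - t *\<^sub>C e))^2" using np d0 unfolding v_def
      by (simp add: diff_diff_eq power_mono)
    also have "\<dots> = (norm v)^2 - 2 * Re (t * c) + (cmod t)^2 * (norm e)^2"
      by (simp add: norm_sub_scaleC_sq c_def)
    also have "Re (t * c) = s * (cmod c)^2"
      by (simp add: t_def mult.assoc complex_norm_square[symmetric] mult.commute[of "cnj c"])
    also have "(cmod t)^2 = s^2 * (cmod c)^2"
      using s0 by (simp add: t_def norm_mult power_mult_distrib)
    finally have "0 \<le> - 2 * (s * (cmod c)^2) + s * (cmod c)^2 * (s * (norm e)^2)"
      by (simp add: power2_eq_square algebra_simps)
    moreover have "s * (cmod c)^2 * (s * (norm e)^2) \<le> s * (cmod c)^2"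
      using s1 s0 by (simp add: mult_left_le)
    ultimately have "s * (cmod c)^2 \<le> 0" by linarith
    hence "c = 0" using s0 by (simp add: mult_le_0_iff)
    thus "cinner e (u - p) = 0" using cinner_commute[of e "u - p"] by (simp add: c_def v_def)
  qed
qed




locale spec =
  fixes D :: "'a::chilbert_space set" and T :: "'a \<Rightarrow> 'a" and z :: "nat \<Rightarrow> complex"
  assumes sym: "symmetric_op D T" and cbi: "compact_bounded_inverse D T"
    and injz: "inj z" and eig: "range z = {mu. op_eigenvalue D T mu}"
begin

definition K where "K = inv_into D T"
definition E where "E n = {v \<in> D. T v = z n *\<^sub>C v}"
definition W where "W = {y. \<forall>n. \<forall>e\<in>E n. cinner e y = 0}"

lemma Dsub: "csubspace D" using sym by (simp add: symmetric_op_def densely_defined_op_def)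
lemma Tlin: "clinear_on D T" using sym by (simp add: symmetric_op_def densely_defined_op_def)
lemma Tsym: "x \<in> D \<Longrightarrow> y \<in> D \<Longrightarrow> cinner (T x) y = cinner x (T y)"
  using sym by (simp add: symmetric_op_def)
lemma bij: "bij_betw T D UNIV" using cbi by (simp add: compact_bounded_inverse_def)
lemma Kbl: "bounded_linear K" using cbi by (simp add: compact_bounded_inverse_def K_def)
lemma Kcpt: "compact (closure (K ` cball 0 1))" using cbi by (simp add: compact_bounded_inverse_def K_def)

lemma KD: "K x \<in> D" unfolding K_def using bij
  by (metis UNIV_I bij_betw_def inv_into_into)
lemma TK: "T (K x) = x" unfolding K_def using bij
  by (metis UNIV_I bij_betw_def f_inv_into_f)
lemma KT: "x \<in> D \<Longrightarrow> K (T x) = x" unfolding K_def using bij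
  by (simp add: bij_betw_def inv_into_f_f)

lemma D0: "0 \<in> D" using Dsub by (simp add: csubspace_def)
lemma T0: "T 0 = 0"
  using Tlin D0 unfolding clinear_on_def by (metis add_0 add_cancel_right_right)
lemma TscaleC: "x \<in> D \<Longrightarrow> T (c *\<^sub>C x) = c *\<^sub>C T x" using Tlin by (simp add: clinear_on_def)
lemma Tadd: "x \<in> D \<Longrightarrow> y \<in> D \<Longrightarrow> T (x + y) = T x + T y" using Tlin by (simp add: clinear_on_def)
lemma DscaleC: "x \<in> D \<Longrightarrow> c *\<^sub>C x \<in> D" using Dsub by (simp add: csubspace_def)
lemma Dadd: "x \<in> D \<Longrightarrow> y \<in> D \<Longrightarrow> x + y \<in> D" using Dsub by (simp add: csubspace_def)

lemma KscaleC: "K (c *\<^sub>C x) = c *\<^sub>C K x"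
  by (metis DscaleC KD KT TK TscaleC)
lemma KscaleR: "K (r *\<^sub>R x) = r *\<^sub>R K x" using Kbl by (simp add: linear_simps)
lemma Kadd: "K (x + y) = K x + K y" using Kbl by (simp add: linear_simps)
lemma K0: "K 0 = 0" using Kbl by (simp add: linear_simps)
lemma Ksym: "cinner (K x) y = cinner x (K y)"
  by (metis KD TK Tsym)
lemma Kinj: "K x = 0 \<Longrightarrow> x = 0" by (metis TK T0)

lemma E_K: "e \<in> E n \<Longrightarrow> e = z n *\<^sub>C K e"
  unfolding E_def by (metis (mono_tags, lifting) KT KscaleC mem_Collect_eq)

lemma E_real: "e \<in> E n \<Longrightarrow> e \<noteq> 0 \<Longrightarrow> cnj (z n) = z n"
proof -
  assume e: "e \<in> E n" "e \<noteq> 0"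
  have "cinner (T e) e = cinner e (T e)" by (rule Tsym) (use e in \<open>auto simp: E_def\<close>)
  hence "cnj (z n) * cinner e e = z n * cinner e e" using e
    unfolding E_def by (simp add: cinner_scaleC_left cinner_scaleC_right)
  thus ?thesis using e by (simp add: cinner_self_eq_zero)
qed

lemma E_orth: "n \<noteq> m \<Longrightarrow> e \<in> E n \<Longrightarrow> e' \<in> E m \<Longrightarrow> cinner e e' = 0"
proof (cases "e = 0")
  case False
  assume a: "n \<noteq> m" "e \<in> E n" "e' \<in> E m"
  have "cinner (T e) e' = cinner e (T e')" by (rule Tsym) (use a in \<open>auto simp: E_def\<close>)
  hence "cnj (z n) * cinner e e' = z m * cinner e e'" using a
    unfolding E_def by (simp add: cinner_scaleC_left cinner_scaleC_right)
  hence "z n * cinner e e' = z m * cinner e e'" using E_real[OF a(2) False] by simp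
  moreover have "z n \<noteq> z m" using injz a(1) by (meson injD)
  ultimately show ?thesis by simp
qed simp

lemma E_alt: "E n = {v. v = z n *\<^sub>C K v}"
proof (intro set_eqI iffI)
  fix v assume "v \<in> E n" thus "v \<in> {v. v = z n *\<^sub>C K v}" using E_K by auto
next
  fix v assume "v \<in> {v. v = z n *\<^sub>C K v}"
  hence v: "v = z n *\<^sub>C K v" by simp
  have "v \<in> D" using v by (metis DscaleC KD)
  moreover have "T v = z n *\<^sub>C v" using v by (metis KD TK TscaleC)
  ultimately show "v \<in> E n" unfolding E_def by simp
qed

lemma E_closed: "closed (E n)"
proof -
  have "bounded_linear (\<lambda>v. z n *\<^sub>C K v)" by (rule bounded_linear_scaleC[OF Kbl])
  hence "continuous_on UNIV (\<lambda>v. z n *\<^sub>C K v)" by (simp add: linear_continuous_on)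
  thus ?thesis unfolding E_alt by (intro closed_Collect_eq) (auto intro: continuous_on_id)
qed

lemma E_sub: "csubspace (E n)"
  unfolding csubspace_def E_def
  by (auto simp: D0 T0 Dadd DscaleC Tadd TscaleC scaleC_add_right scaleC_scaleC mult.commute)

lemma eig_index: "v \<in> D \<Longrightarrow> v \<noteq> 0 \<Longrightarrow> T v = mu *\<^sub>C v \<Longrightarrow> \<exists>n. z n = mu"
proof -
  assume "v \<in> D" "v \<noteq> 0" "T v = mu *\<^sub>C v"
  hence "op_eigenvalue D T mu" unfolding op_eigenvalue_def by blast
  hence "mu \<in> range z" using eig by blast
  thus ?thesis by auto
qed

lemma W_add: "x \<in> W \<Longrightarrow> y \<in> W \<Longrightarrow> x + y \<in> W"
  unfolding W_def by (simp add: cinner_add_right)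
lemma W_scaleR: "x \<in> W \<Longrightarrow> r *\<^sub>R x \<in> W"
  unfolding W_def by (simp add: cinner_scaleR_right)
lemma W_K: "x \<in> W \<Longrightarrow> K x \<in> W"
proof -
  assume x: "x \<in> W"
  have "cinner e (K x) = 0" if e: "e \<in> E n" for e n
  proof (cases "e = 0")
    case False
    have zn: "z n \<noteq> 0" using E_K[OF e] False by auto
    have "K e = inverse (z n) *\<^sub>C e" using E_K[OF e] zn
      by (metis KscaleC scaleC_scaleC field_class.field_inverse scaleC_one mult.commute)
    hence "cinner e (K x) = cnj (inverse (z n)) * cinner e x" by (simp add: Ksym[symmetric] cinner_scaleC_left)
    thus ?thesis using x e unfolding W_def by simp
  qed simp
  thus ?thesis unfolding W_def by auto
qed

end



context spec begin

lemma Knorm: "\<exists>B>0. \<forall>x. norm (K x) \<le> norm x * B"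
  using bounded_linear.pos_bounded[OF Kbl] by blast

lemma complete_eig: "y \<in> W \<Longrightarrow> y = 0"
proof (rule ccontr)
  assume y0W: "y \<in> W" and y0: "y \<noteq> 0"
  define S where "S = {x \<in> W. norm x = 1}"
  define N where "N = Sup ((\<lambda>x. norm (K x)) ` S)"
  obtain B where B: "B > 0" "\<And>x. norm (K x) \<le> norm x * B" using Knorm by blast
  have bdd: "bdd_above ((\<lambda>x. norm (K x)) ` S)"
    by (rule bdd_aboveI[of _ B]) (use B in \<open>auto simp: S_def, metis mult_1\<close>)
  define y1 where "y1 = (1 / norm y) *\<^sub>R y"
  have y1S: "y1 \<in> S" unfolding S_def y1_def using y0W y0 by (simp add: W_scaleR)
  hence Sne: "S \<noteq> {}" by auto
  have normK: "norm (K x) \<le> N * norm x" if x: "x \<in> W" for x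
  proof (cases "x = 0")
    case True thus ?thesis by (simp add: K0)
  next
    case False
    have "(1 / norm x) *\<^sub>R x \<in> S" unfolding S_def using x False by (simp add: W_scaleR)
    hence "norm (K ((1 / norm x) *\<^sub>R x)) \<le> N" unfolding N_def using bdd by (simp add: cSup_upper)
    hence "norm (K x) / norm x \<le> N" by (simp add: KscaleR)
    thus ?thesis using False by (simp add: field_simps)
  qed
  have "K y1 \<noteq> 0"
  proof
    assume "K y1 = 0" hence "y1 = 0" by (rule Kinj)
    thus False using y1S by (simp add: S_def)
  qed
  hence "0 < norm (K y1)" by simp
  also have "norm (K y1) \<le> N" unfolding N_def using bdd y1S by (simp add: cSup_upper)
  finally have Npos: "0 < N" .
  have "\<exists>x\<in>S. N - 1 / (real k + 1) < norm (K x)" for k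
  proof -
    have "N - 1 / (real k + 1) < N" by simp
    thus ?thesis unfolding N_def using less_cSup_iff[OF _ bdd] Sne by auto
  qed
  then obtain x where xS: "\<And>k. x k \<in> S" and xk: "\<And>k. N - 1 / (real k + 1) < norm (K (x k))" by metis
  have xW: "x k \<in> W" and xn: "norm (x k) = 1" for k using xS unfolding S_def by auto
  define r where "r k = K (K (x k)) - (N^2) *\<^sub>R x k" for k
  have rbound: "(norm (r k))^2 \<le> 2 * N^3 * (1 / (real k + 1))" for k
  proof -
    define a where "a = norm (K (x k))"
    define \<delta> where "\<delta> = 1 / (real k + 1)"
    have a1: "a \<le> N" using normK[OF xW] xn unfolding a_def by simp
    have a2: "N - \<delta> < a" using xk unfolding a_def \<delta>_def by simp
    have a0: "0 \<le> a" unfolding a_def by simp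
    have KKle: "norm (K (K (x k))) \<le> N * a" using normK[OF W_K[OF xW]] unfolding a_def .
    have "Re (cinner (K (K (x k))) ((N^2) *\<^sub>R x k)) = N^2 * a^2"
      by (simp add: cinner_scaleR_right Ksym cinner_self_real a_def)
    moreover have "(norm ((N^2) *\<^sub>R x k))^2 = N^4" using xn by (simp add: power_mult_distrib flip: power_mult)
    ultimately have "(norm (r k))^2 = (norm (K (K (x k))))^2 - 2 * (N^2 * a^2) + N^4"
      unfolding r_def norm_diff_sq by simp
    also have "(norm (K (K (x k))))^2 \<le> (N * a)^2" using KKle by (intro power_mono) auto
    hence "(norm (K (K (x k))))^2 - 2 * (N^2 * a^2) + N^4 \<le> (N*a)^2 - 2 * (N^2 * a^2) + N^4" by linarith
    also have "\<dots> = N^2 * ((N - a) * (N + a))" by (simp add: power2_eq_square power4_eq_xxxx algebra_simps)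
    also have "\<dots> \<le> N^2 * (\<delta> * (2 * N))"
    proof -
      have "(N - a) * (N + a) \<le> \<delta> * (2 * N)"
        using a1 a2 a0 Npos by (intro mult_mono) auto
      thus ?thesis using Npos by (intro mult_left_mono) auto
    qed
    also have "\<dots> = 2 * N^3 * \<delta>" by (simp add: power2_eq_square power3_eq_cube)
    finally show ?thesis unfolding \<delta>_def .
  qed
  have rlim: "r \<longlonglongrightarrow> 0"
  proof (rule Lim_null_comparison)
    show "\<forall>\<^sub>F k in sequentially. norm (r k) \<le> sqrt (2 * N^3 * (1 / (real k + 1)))"
      using rbound by (intro always_eventually allI) (metis norm_ge_zero real_le_rsqrt)
    have "(\<lambda>k. 2 * N^3 * (1 / (real k + 1))) \<longlonglongrightarrow> 2 * N^3 * 0"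
      by (intro tendsto_mult tendsto_const) (use LIMSEQ_inverse_real_of_nat in \<open>simp add: inverse_eq_divide add.commute\<close>)
    hence "(\<lambda>k. sqrt (2 * N^3 * (1 / (real k + 1)))) \<longlonglongrightarrow> sqrt 0"
      by (intro tendsto_real_sqrt) simp
    thus "(\<lambda>k. sqrt (2 * N^3 * (1 / (real k + 1)))) \<longlonglongrightarrow> 0" by simp
  qed
  have "seq_compact (closure (K ` cball 0 1))" using Kcpt by (rule compact_imp_seq_compact)
  moreover have "\<forall>k. K (x k) \<in> closure (K ` cball 0 1)" using xn
    by (metis closure_subset image_eqI mem_cball_0 order_refl subsetD)
  ultimately obtain l \<rho> where \<rho>: "strict_mono \<rho>" and ll: "(\<lambda>k. K (x (\<rho> k))) \<longlonglongrightarrow> l"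
    by (auto elim!: seq_compactE[where f="\<lambda>k. K (x k)"] simp: o_def)
  have l2: "(\<lambda>k. K (K (x (\<rho> k)))) \<longlonglongrightarrow> K l" using bounded_linear.tendsto[OF Kbl ll] .
  have r2: "(\<lambda>k. r (\<rho> k)) \<longlonglongrightarrow> 0" using LIMSEQ_subseq_LIMSEQ[OF rlim \<rho>] by (simp add: o_def)
  define v where "v = (1 / N^2) *\<^sub>R K l"
  have xv: "(\<lambda>k. x (\<rho> k)) \<longlonglongrightarrow> v"
  proof -
    have eq: "x (\<rho> k) = (1 / N^2) *\<^sub>R (K (K (x (\<rho> k))) - r (\<rho> k))" for k
      using Npos by (simp add: r_def)
    have "(\<lambda>k. (1 / N^2) *\<^sub>R (K (K (x (\<rho> k))) - r (\<rho> k))) \<longlonglongrightarrow> (1 / N^2) *\<^sub>R (K l - 0)"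
      by (intro tendsto_intros l2 r2)
    thus ?thesis unfolding v_def by (subst eq) simp
  qed
  have vn: "norm v = 1"
  proof -
    have "(\<lambda>k. norm (x (\<rho> k))) \<longlonglongrightarrow> norm v" by (intro tendsto_intros xv)
    thus ?thesis using xn LIMSEQ_unique by (simp add: LIMSEQ_const_iff)
  qed
  have vW: "v \<in> W"
    unfolding W_def mem_Collect_eq
  proof (intro allI ballI)
    fix n e assume "e \<in> E n"
    have "(\<lambda>k. cinner e (x (\<rho> k))) \<longlonglongrightarrow> cinner e v"
      using bounded_linear.tendsto[OF bounded_linear_cinner_right xv] .
    moreover have "cinner e (x (\<rho> k)) = 0" for k using xW \<open>e \<in> E n\<close> unfolding W_def by auto
    ultimately show "cinner e v = 0" using LIMSEQ_unique by (simp add: LIMSEQ_const_iff)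
  qed
  have KKv: "K (K v) = (N^2) *\<^sub>R v"
  proof -
    have "(\<lambda>k. K (K (x (\<rho> k)))) \<longlonglongrightarrow> K (K v)"
      by (rule bounded_linear.tendsto[OF Kbl bounded_linear.tendsto[OF Kbl xv]])
    hence "K (K v) = K l" using l2 LIMSEQ_unique by blast
    thus ?thesis using Npos by (simp add: v_def)
  qed
  have v0: "v \<noteq> 0" using vn by auto
  obtain w \<mu> where wW: "w \<in> W" and w0: "w \<noteq> 0" and \<mu>0: "\<mu> \<noteq> 0" and Kw: "K w = \<mu> *\<^sub>R w"
  proof (cases "K v + N *\<^sub>R v = 0")
    case True
    hence "K v = (- N) *\<^sub>R v" by (simp add: eq_neg_iff_add_eq_0)
    thus ?thesis using that[of v "-N"] vW v0 Npos by simp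
  next
    case False
    have "K (K v + N *\<^sub>R v) = N *\<^sub>R (K v + N *\<^sub>R v)"
      by (simp add: Kadd KscaleR KKv power2_eq_square algebra_simps)
    thus ?thesis using that[of "K v + N *\<^sub>R v" N] False Npos vW
      by (simp add: W_add W_K W_scaleR)
  qed
  have wK: "w = K ((1 / \<mu>) *\<^sub>R w)" using Kw \<mu>0 by (simp add: KscaleR)
  have wD: "w \<in> D" using wK KD by metis
  have "T w = (1 / \<mu>) *\<^sub>R w" using wK TK by metis
  hence Tw: "T w = complex_of_real (1 / \<mu>) *\<^sub>C w" by (simp add: scaleR_scaleC)
  then obtain n where "z n = complex_of_real (1 / \<mu>)" using eig_index wD w0 by blast
  hence "w \<in> E n" unfolding E_def using wD Tw by simp
  hence "cinner w w = 0" using wW unfolding W_def by blast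
  thus False using w0 by (simp add: cinner_self_eq_zero)
qed

end



context spec begin

definition P where "P n u = (SOME p. p \<in> E n \<and> (\<forall>e\<in>E n. cinner e (u - p) = 0))"

lemma P_prop: "P n u \<in> E n" "\<And>e. e \<in> E n \<Longrightarrow> cinner e (u - P n u) = 0"
proof -
  have "\<exists>p. p \<in> E n \<and> (\<forall>e\<in>E n. cinner e (u - p) = 0)"
    using projection_exists[OF E_sub E_closed] by blast
  hence "P n u \<in> E n \<and> (\<forall>e\<in>E n. cinner e (u - P n u) = 0)"
    unfolding P_def by (rule someI_ex)
  thus "P n u \<in> E n" "\<And>e. e \<in> E n \<Longrightarrow> cinner e (u - P n u) = 0" by auto
qed

lemma expansion: "(\<lambda>n. P n u) sums u"
proof -
  define a where "a n = P n u" for n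
  define S where "S N = (\<Sum>n<N. a n)" for N
  define R where "R N = (\<Sum>n<N. (norm (a n))^2)" for N
  have aE: "a n \<in> E n" for n unfolding a_def by (rule P_prop)
  have orth: "n \<noteq> m \<Longrightarrow> cinner (a n) (a m) = 0" for n m using E_orth aE by blast
  have au: "cinner u (a n) = of_real ((norm (a n))^2)" for n
  proof -
    have "cinner (a n) (u - a n) = 0" unfolding a_def by (rule P_prop) (rule P_prop)
    hence "cinner (a n) u = cinner (a n) (a n)" by (simp add: cinner_diff_right)
    thus ?thesis using cinner_commute[of u "a n"] by (simp add: cinner_self_real)
  qed
  have pyth: "finite A \<Longrightarrow> (norm (\<Sum>n\<in>A. a n))^2 = (\<Sum>n\<in>A. (norm (a n))^2)" for A
  proof (induction A rule: finite_induct)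
    case (insert x A)
    have "cinner (\<Sum>n\<in>A. a n) (a x) = 0"
      using insert(2) unfolding cinner_sum_left by (intro sum.neutral) (metis orth)
    hence "cinner (a x) (\<Sum>n\<in>A. a n) = 0" using cinner_commute by (metis complex_cnj_zero)
    thus ?case using insert by (simp add: norm_add_sq add.commute)
  qed simp
  have bessel: "(norm (u - S N))^2 = (norm u)^2 - R N" for N
  proof (induction N)
    case (Suc N)
    have "cinner (u - S N) (a N) = of_real ((norm (a N))^2)"
    proof -
      have "cinner (S N) (a N) = 0" unfolding S_def
        by (auto simp: cinner_sum_left orth intro!: sum.neutral)
      thus ?thesis by (simp add: cinner_diff_left au)
    qed
    moreover have "u - S (Suc N) = (u - S N) - a N" by (simp add: S_def)
    ultimately have "(norm (u - S (Suc N)))^2 = (norm (u - S N))^2 - 2 * (norm (a N))^2 + (norm (a N))^2"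
      by (simp only: norm_diff_sq) (simp flip: of_real_power)
    also have "\<dots> = (norm u)^2 - R (Suc N)" using Suc by (simp add: R_def)
    finally show ?case .
  qed (simp add: S_def R_def)
  have Rle: "R N \<le> (norm u)^2" for N using bessel[of N] by (metis diff_ge_0_iff_ge zero_le_power2)
  have "summable (\<lambda>n. (norm (a n))^2)"
    by (rule summableI_nonneg_bounded[where x="(norm u)^2"]) (use Rle in \<open>auto simp: R_def\<close>)
  hence "convergent R" unfolding R_def using summable_LIMSEQ convergent_def by blast
  hence CR: "Cauchy R" by (simp add: Cauchy_convergent_iff)
  have diff: "(norm (S m - S n))^2 = \<bar>R m - R n\<bar>" for m n
  proof -
    have *: "(norm (S m - S n))^2 = R m - R n" if "n \<le> m" for m n
    proof -
      have "S m - S n = (\<Sum>k\<in>{n..<m}. a k)"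
        using sum_diff_nat_ivl[of 0 n m a] that by (simp add: S_def atLeast0LessThan)
      moreover have "R m - R n = (\<Sum>k\<in>{n..<m}. (norm (a k))^2)"
        using sum_diff_nat_ivl[of 0 n m "\<lambda>k. (norm (a k))^2"] that by (simp add: R_def atLeast0LessThan)
      ultimately show ?thesis using pyth by simp
    qed
    show ?thesis
    proof (cases "n \<le> m")
      case True thus ?thesis using *[OF True] by (metis abs_of_nonneg zero_le_power2)
    next
      case False
      hence "(norm (S n - S m))^2 = R n - R m" using * by simp
      thus ?thesis by (metis abs_minus_commute abs_of_nonneg norm_minus_commute zero_le_power2)
    qed
  qed
  have "Cauchy S"
  proof (rule CauchyI)
    fix \<epsilon> :: real assume e: "0 < \<epsilon>"
    then obtain M where M: "\<forall>m\<ge>M. \<forall>n\<ge>M. dist (R m) (R n) < \<epsilon>^2"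
      using CR unfolding Cauchy_def by (meson zero_less_power)
    show "\<exists>M. \<forall>m\<ge>M. \<forall>n\<ge>M. norm (S m - S n) < \<epsilon>"
    proof (intro exI allI impI)
      fix m n assume "M \<le> m" "M \<le> n"
      hence "(norm (S m - S n))^2 < \<epsilon>^2" using M diff by (simp add: dist_real_def)
      thus "norm (S m - S n) < \<epsilon>" using e by (meson less_imp_le power_less_imp_less_base)
    qed
  qed
  then obtain s where Ss: "S \<longlonglongrightarrow> s" using Cauchy_convergent_iff convergent_def by blast
  have "u - s \<in> W" unfolding W_def mem_Collect_eq
  proof (intro allI ballI)
    fix m e assume e: "e \<in> E m"
    have "(\<lambda>N. cinner e (u - S N)) \<longlonglongrightarrow> cinner e (u - s)"
      by (rule bounded_linear.tendsto[OF bounded_linear_cinner_right]) (intro tendsto_intros Ss)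
    moreover have "(\<lambda>N. cinner e (u - S N)) \<longlonglongrightarrow> 0"
    proof (rule tendsto_eventually, rule eventually_sequentiallyI[of "Suc m"])
      fix N assume N: "Suc m \<le> N"
      have "(\<Sum>n<N. cinner e (a n)) = (\<Sum>n<N. if n = m then cinner e (a m) else 0)"
        by (rule sum.cong) (use E_orth[OF _ e aE] in auto)
      also have "\<dots> = cinner e (a m)" using N by simp
      finally have "cinner e (u - S N) = cinner e (u - a m)"
        by (simp add: S_def cinner_diff_right cinner_sum_right)
      also have "\<dots> = 0" using P_prop(2)[OF e] cinner_commute by (simp add: a_def)
      finally show "cinner e (u - S N) = 0" .
    qed
    ultimately show "cinner e (u - s) = 0" using LIMSEQ_unique by blast
  qed
  hence "u - s = 0" by (rule complete_eig)
  hence "u = s" by simp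
  thus ?thesis using Ss unfolding sums_def S_def a_def by simp
qed

end



lemma bounded_linear_scaleC_left: "bounded_linear (\<lambda>c::complex. c *\<^sub>C (e::'a::complex_inner))"
  apply (rule bounded_linear_intro[where K="norm e"])
    apply (simp add: scaleC_add_left)
   apply (simp add: scaleR_scaleC scaleC_scaleC scaleR_conv_of_real)
  by (simp add: norm_scaleC)

lemma tendsto_scaleC_left: "(c \<longlongrightarrow> c0) F \<Longrightarrow> ((\<lambda>w. c w *\<^sub>C (e::'a::complex_inner)) \<longlongrightarrow> c0 *\<^sub>C e) F"
  by (rule bounded_linear.tendsto[OF bounded_linear_scaleC_left])

lemma F_cont:
  fixes F :: "complex \<Rightarrow> ('a::complex_inner \<Rightarrow>\<^sub>L 'a)"
  assumes "op_entire F"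
  shows "((\<lambda>w. blinfun_apply (F w) x) \<longlongrightarrow> blinfun_apply (F c) x) (at c)"
proof -
  obtain L :: "'a \<Rightarrow>\<^sub>L 'a" where L: "((\<lambda>w. onorm (\<lambda>x. inverse (w - c) *\<^sub>C (F w x - F c x) - L x)) \<longlongrightarrow> 0) (at c)"
    using assms unfolding op_entire_def by blast
  define g where "g w = (\<lambda>x. inverse (w - c) *\<^sub>C (F w x - F c x) - L x)" for w
  have gbl: "bounded_linear (g w)" for w
    unfolding g_def
    by (intro bounded_linear_sub bounded_linear_scaleC bounded_linear_blinfun_apply bounded_linear_ident)
  have bound: "norm (F w x - F c x) \<le> cmod (w - c) * (onorm (g w) * norm x + norm (L x))" if "w \<noteq> c" for w
  proof -
    have "F w x - F c x = (w - c) *\<^sub>C (g w x + L x)"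
      using that by (simp add: g_def scaleC_scaleC scaleC_one)
    hence "norm (F w x - F c x) = cmod (w - c) * norm (g w x + L x)" by (simp add: norm_scaleC)
    also have "\<dots> \<le> cmod (w - c) * (norm (g w x) + norm (L x))"
      by (intro mult_left_mono norm_triangle_ineq) simp
    also have "\<dots> \<le> cmod (w - c) * (onorm (g w) * norm x + norm (L x))"
      by (intro mult_left_mono add_right_mono onorm gbl) simp
    finally show ?thesis .
  qed
  have "((\<lambda>w. F w x - F c x) \<longlongrightarrow> 0) (at c)"
  proof (rule Lim_null_comparison)
    show "\<forall>\<^sub>F w in at c. norm (F w x - F c x) \<le> cmod (w - c) * (onorm (g w) * norm x + norm (L x))"
      using bound eventually_at_filter by (metis (mono_tags, lifting) eventually_mono eventually_at_topological UNIV_I open_UNIV)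
    have "((\<lambda>w. cmod (w - c) * (onorm (g w) * norm x + norm (L x))) \<longlongrightarrow> cmod (c - c) * (0 * norm x + norm (L x))) (at c)"
      by (intro tendsto_intros) (use L in \<open>simp add: g_def\<close>)
    thus "((\<lambda>w. cmod (w - c) * (onorm (g w) * norm x + norm (L x))) \<longlongrightarrow> 0) (at c)" by simp
  qed
  thus ?thesis by (simp add: LIM_zero_iff)
qed




context spec begin

lemma Tdiff: "x \<in> D \<Longrightarrow> y \<in> D \<Longrightarrow> T (x - y) = T x - T y"
proof -
  assume a: "x \<in> D" "y \<in> D"
  have "(-1::complex) *\<^sub>C y = - y"
    using scaleC_add_left[of 1 "-1" y] by (simp add: scaleC_one eq_neg_iff_add_eq_0 add.commute)
  moreover have "(-1::complex) *\<^sub>C T y = - T y"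
    using scaleC_add_left[of 1 "-1" "T y"] by (simp add: scaleC_one eq_neg_iff_add_eq_0 add.commute)
  ultimately show ?thesis using a Tadd[OF a(1) DscaleC[OF a(2)], of "-1"] TscaleC[OF a(2), of "-1"]
    by simp
qed

lemma resolvent_E:
  assumes e: "e \<in> E m" and w: "w \<notin> range z"
  shows "resolvent D T w e = (1 / (w - z m)) *\<^sub>C e"
proof -
  have wz: "w \<noteq> z m" using w by auto
  define y0 where "y0 = (1 / (w - z m)) *\<^sub>C e"
  have eD: "e \<in> D" and Te: "T e = z m *\<^sub>C e" using e by (auto simp: E_def)
  have y0D: "y0 \<in> D" unfolding y0_def by (rule DscaleC[OF eD])
  have img: "w *\<^sub>C y0 - T y0 = e"
  proof -
    have "w *\<^sub>C y0 - T y0 = (w / (w - z m)) *\<^sub>C e - (z m / (w - z m)) *\<^sub>C e"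
      unfolding y0_def using eD Te by (simp add: TscaleC scaleC_scaleC)
    also have "\<dots> = ((w / (w - z m)) - (z m / (w - z m))) *\<^sub>C e" by (simp add: scaleC_diff_left)
    also have "(w / (w - z m)) - (z m / (w - z m)) = 1" proof -
      have "w - z m \<noteq> 0" using wz by simp
      thus ?thesis by (simp add: diff_divide_distrib[symmetric])
    qed
    finally show ?thesis by (simp add: scaleC_one)
  qed
  have inj: "inj_on (\<lambda>y. w *\<^sub>C y - T y) D"
  proof (rule inj_onI)
    fix x y assume x: "x \<in> D" and y: "y \<in> D" and eq: "w *\<^sub>C x - T x = w *\<^sub>C y - T y"
    have dD: "x - y \<in> D" using csubspace_diff[OF Dsub x y] .
    have "T (x - y) = w *\<^sub>C (x - y)"
      using eq by (simp add: Tdiff[OF x y] scaleC_diff_right algebra_simps)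
    show "x = y"
    proof (rule ccontr)
      assume "x \<noteq> y"
      then obtain n where "z n = w" using eig_index[OF dD] \<open>T (x - y) = _\<close> by auto
      thus False using w by auto
    qed
  qed
  have "inv_into D (\<lambda>y. w *\<^sub>C y - T y) ((\<lambda>y. w *\<^sub>C y - T y) y0) = y0"
    by (rule inv_into_f_f[OF inj y0D])
  hence "inv_into D (\<lambda>y. w *\<^sub>C y - T y) e = y0" using img by simp
  thus ?thesis unfolding resolvent_def y0_def by simp
qed

end

theorem theorem4p2:
  fixes D :: "'a::chilbert_space set" and T :: "'a \<Rightarrow> 'a"
    and z :: "nat \<Rightarrow> complex" and Q :: "complex \<Rightarrow> complex"
    and F :: "complex \<Rightarrow> ('a \<Rightarrow>\<^sub>L 'a)"
  assumes "separable_hspace TYPE('a)" and "infinite_dimensional TYPE('a)"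
    and "symmetric_op D T" and "compact_bounded_inverse D T"
    and "inj z" and "range z = {mu. op_eigenvalue D T mu}"
    and "Q holomorphic_on UNIV" and "{w. Q w = 0} = range z" and "\<And>n. deriv Q (z n) \<noteq> 0"
    and "\<And>w. cbounded_op (F w)" and "op_entire F"
    and "\<And>w x. w \<notin> range z \<Longrightarrow> blinfun_apply (F w) x = Q w *\<^sub>C resolvent D T w x"
  shows "(\<forall>f\<in>H_space F. \<forall>g\<in>H_space F. (\<forall>n. f (z n) = g (z n)) \<longrightarrow> f = g)
    \<and> (\<forall>f\<in>H_space F. \<forall>w. (\<lambda>n. interp_kernel Q (z n) w *\<^sub>C f (z n)) sums f w)"
proof -
  interpret spec D T z using assms(3-6) by unfold_locales
  note Qhol = assms(7) and Qzero = assms(8) and dQ = assms(9) and Fent = assms(11) and Fres = assms(12)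
  have Qz: "Q (z n) = 0" for n using Qzero by auto
  have FE: "blinfun_apply (F w) e = (Q w / (w - z m)) *\<^sub>C e" if "e \<in> E m" "w \<notin> range z" for e m w
    using Fres[OF that(2)] resolvent_E[OF that] by (simp add: scaleC_scaleC)
  have Qcont: "isCont Q c" for c
    using Qhol by (meson UNIV_I holomorphic_on_imp_continuous_on continuous_on_eq_continuous_at open_UNIV)
  have Qder: "((\<lambda>w. Q w / (w - z n)) \<longlongrightarrow> deriv Q (z n)) (at (z n))" for n
  proof -
    have "(Q has_field_derivative deriv Q (z n)) (at (z n))"
      using holomorphic_derivI[OF Qhol open_UNIV UNIV_I] by blast
    thus ?thesis using Qz by (simp add: has_field_derivative_iff)
  qed
  have evQ: "eventually (\<lambda>w. w \<notin> range z) (at (z n))" for n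
  proof -
    have "eventually (\<lambda>w. Q w / (w - z n) \<noteq> 0) (at (z n))"
      using tendsto_imp_eventually_ne[OF Qder dQ] .
    thus ?thesis by eventually_elim (use Qzero in auto)
  qed
  have FzE: "blinfun_apply (F (z n)) e = (if m = n then deriv Q (z n) *\<^sub>C e else 0)" if e: "e \<in> E m" for e m n
  proof -
    have lim: "((\<lambda>w. blinfun_apply (F w) e) \<longlongrightarrow> blinfun_apply (F (z n)) e) (at (z n))"
      by (rule F_cont[OF Fent])
    have ev: "eventually (\<lambda>w. (Q w / (w - z m)) *\<^sub>C e = blinfun_apply (F w) e) (at (z n))"
      using evQ[of n] by eventually_elim (use FE e in auto)
    have lim2: "((\<lambda>w. (Q w / (w - z m)) *\<^sub>C e) \<longlongrightarrow> (if m = n then deriv Q (z n) *\<^sub>C e else 0)) (at (z n))"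
    proof (cases "m = n")
      case True thus ?thesis using tendsto_scaleC_left[OF Qder[of n]] by simp
    next
      case False
      have "z n \<noteq> z m" using assms(5) False by (metis injD)
      have "((\<lambda>w. Q w / (w - z m)) \<longlongrightarrow> Q (z n) / (z n - z m)) (at (z n))"
        by (intro tendsto_intros isCont_tendsto_compose[OF Qcont]) (use \<open>z n \<noteq> z m\<close> in auto)
      hence "((\<lambda>w. Q w / (w - z m)) \<longlongrightarrow> 0) (at (z n))" using Qz by simp
      thus ?thesis using tendsto_scaleC_left[of _ 0] False by fastforce
    qed
    have "((\<lambda>w. blinfun_apply (F w) e) \<longlongrightarrow> (if m = n then deriv Q (z n) *\<^sub>C e else 0)) (at (z n))"
      using Lim_transform_eventually[OF lim2 ev] .
    thus ?thesis using tendsto_unique[OF at_neq_bot lim] by simp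
  qed
  have main: "(\<lambda>n. interp_kernel Q (z n) w *\<^sub>C blinfun_apply (F (z n)) u) sums blinfun_apply (F w) u" for u w
  proof (cases "w \<in> range z")
    case True
    then obtain m where m: "w = z m" by auto
    have "(\<lambda>n. interp_kernel Q (z n) w *\<^sub>C blinfun_apply (F (z n)) u)
        = (\<lambda>n. if n = m then blinfun_apply (F (z n)) u else 0)"
    proof
      fix n show "interp_kernel Q (z n) w *\<^sub>C blinfun_apply (F (z n)) u = (if n = m then blinfun_apply (F (z n)) u else 0)"
      proof (cases "n = m")
        case True thus ?thesis using m by (simp add: interp_kernel_def scaleC_one)
      next
        case False
        hence "z m \<noteq> z n" using assms(5) by (metis injD)
        thus ?thesis using False m Qz by (simp add: interp_kernel_def)
      qed
    qed
    thus ?thesis using sums_single[of m "\<lambda>n. blinfun_apply (F (z n)) u"] m by simp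
  next
    case False
    have exp: "(\<lambda>n. P n u) sums u" by (rule expansion)
    have Fzu: "blinfun_apply (F (z n)) u = deriv Q (z n) *\<^sub>C P n u" for n
    proof -
      have "(\<lambda>m. blinfun_apply (F (z n)) (P m u)) sums blinfun_apply (F (z n)) u"
        by (rule bounded_linear.sums[OF blinfun.bounded_linear_right exp])
      moreover have "(\<lambda>m. blinfun_apply (F (z n)) (P m u)) = (\<lambda>m. if m = n then deriv Q (z n) *\<^sub>C P m u else 0)"
        using FzE P_prop(1) by auto
      ultimately show ?thesis using sums_single[of n "\<lambda>m. deriv Q (z n) *\<^sub>C P m u"] sums_unique2 by metis
    qed
    have "(\<lambda>n. blinfun_apply (F w) (P n u)) sums blinfun_apply (F w) u"
      by (rule bounded_linear.sums[OF blinfun.bounded_linear_right exp])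
    moreover have "blinfun_apply (F w) (P n u) = interp_kernel Q (z n) w *\<^sub>C blinfun_apply (F (z n)) u" for n
    proof -
      have "w \<noteq> z n" using False by auto
      thus ?thesis using FE[OF P_prop(1) False] dQ[of n]
        by (simp add: Fzu interp_kernel_def scaleC_scaleC)
    qed
    ultimately show ?thesis by simp
  qed
  show ?thesis
  proof (intro conjI ballI allI impI)
    fix f w assume "f \<in> H_space F"
    then obtain u where "f = (\<lambda>z. blinfun_apply (F z) u)" unfolding H_space_def by auto
    thus "(\<lambda>n. interp_kernel Q (z n) w *\<^sub>C f (z n)) sums f w" using main by simp
  next
    fix f g assume "f \<in> H_space F" "g \<in> H_space F" and eq: "\<forall>n. f (z n) = g (z n)"
    then obtain u u' where fu: "f = (\<lambda>z. blinfun_apply (F z) u)" and gu: "g = (\<lambda>z. blinfun_apply (F z) u')"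
      unfolding H_space_def by auto
    show "f = g"
    proof
      fix w
      have "(\<lambda>n. interp_kernel Q (z n) w *\<^sub>C f (z n)) sums f w" using main fu by simp
      moreover have "(\<lambda>n. interp_kernel Q (z n) w *\<^sub>C f (z n)) sums g w" using main gu eq by simp
      ultimately show "f w = g w" using sums_unique2 by blast
    qed
  qed
qed



end
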